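(* Let $n\ge3$, let $p(t)=2(t-1)+3(t-1)^2+\frac23(t-1)^3-\frac16(t-1)^4+\frac1{15}(t-1)^5$, and let $$F(x)=\frac{1}{1-\cos(2\pi/n)}\sum_{i\in\mathbb{Z}_n}(x_i-x_{i+1})^2-\sum_{i=1}^n p(x_i)\in\mathbb{R}[x_1,\dots,x_n].$$ Let $W\subseteq\mathbb{R}[x]_3$ be a linear subspace. Suppose there exist $h\in\mathbb{R}[x]_4$ and a basis $q_1,\dots,q_N$ of $W$ such that $F(x)+(\|x\|^2-n)h(x)=\sum_{j=1}^N q_j(x)^2$ (equivalently, the sum-of-squares representation has a positive definite Gram matrix with respect to a basis of $W$). Then $$W\subseteq W_{\max}:=\{q\in\mathbb{R}[x]_3:\ q(\mathbf{1})=0,\ \phi^\top\nabla q(\mathbf{1})=0,\ \psi^\top\nabla q(\mathbf{1})=0\},$$ where $\mathbf 1=(1,\dots,1)$, $\phi_i=\cos(2\pi i/n)$ and $\psi_i=\sin(2\pi i/n)$ for $i=1,\dots,n$.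
   Context: $\mathbb{R}[x]_k$ denotes real polynomials in $x=(x_1,\dots,x_n)$ of degree at most $k$; $\|x\|^2=\sum_i x_i^2$; indices are taken modulo $n$. *)

theory Defs
  imports "HOL-Analysis.Analysis"
begin

text \<open>Points of R^n are modelled as functions nat => real, using coordinates 0..n-1
  (coordinate j corresponds to the paper's x_(j+1)).\<close>

definition exps :: "nat \<Rightarrow> nat \<Rightarrow> (nat \<Rightarrow> nat) set" where
  "exps n k = {\<alpha>. (\<forall>i\<ge>n. \<alpha> i = 0) \<and> (\<Sum>i<n. \<alpha> i) \<le> k}"

definition polys :: "nat \<Rightarrow> nat \<Rightarrow> ((nat \<Rightarrow> real) \<Rightarrow> real) set" where
  "polys n k = {f. \<exists>c :: (nat \<Rightarrow> nat) \<Rightarrow> real.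
      \<forall>x. f x = (\<Sum>\<alpha>\<in>exps n k. c \<alpha> * (\<Prod>i<n. x i ^ \<alpha> i))}"

definition pfun :: "real \<Rightarrow> real" where
  "pfun t = 2*(t-1) + 3*(t-1)^2 + (2/3)*(t-1)^3 - (1/6)*(t-1)^4 + (1/15)*(t-1)^5"

definition Ffun :: "nat \<Rightarrow> (nat \<Rightarrow> real) \<Rightarrow> real" where
  "Ffun n x = 1 / (1 - cos (2*pi / real n)) * (\<Sum>i<n. (x i - x ((i+1) mod n))^2)
              - (\<Sum>i<n. pfun (x i))"

definition sqnorm :: "nat \<Rightarrow> (nat \<Rightarrow> real) \<Rightarrow> real" where
  "sqnorm n x = (\<Sum>i<n. (x i)^2)"

definition ones :: "nat \<Rightarrow> real" where
  "ones = (\<lambda>_. 1)"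

definition pderiv_at :: "((nat \<Rightarrow> real) \<Rightarrow> real) \<Rightarrow> nat \<Rightarrow> (nat \<Rightarrow> real) \<Rightarrow> real" where
  "pderiv_at q i a = deriv (\<lambda>t. q (a(i := t))) (a i)"

definition phi :: "nat \<Rightarrow> nat \<Rightarrow> real" where
  "phi n j = cos (2*pi*real (j+1) / real n)"

definition psi :: "nat \<Rightarrow> nat \<Rightarrow> real" where
  "psi n j = sin (2*pi*real (j+1) / real n)"

definition Wmax :: "nat \<Rightarrow> ((nat \<Rightarrow> real) \<Rightarrow> real) set" where
  "Wmax n = {q \<in> polys n 3. q ones = 0
      \<and> (\<Sum>i<n. phi n i * pderiv_at q i ones) = 0
      \<and> (\<Sum>i<n. psi n i * pderiv_at q i ones) = 0}"

definition is_subspace :: "('a \<Rightarrow> real) set \<Rightarrow> bool" where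
  "is_subspace W \<longleftrightarrow> (\<lambda>_. 0) \<in> W \<and> (\<forall>f\<in>W. \<forall>g\<in>W. (\<lambda>x. f x + g x) \<in> W)
      \<and> (\<forall>c. \<forall>f\<in>W. (\<lambda>x. c * f x) \<in> W)"

definition is_basis :: "('a \<Rightarrow> real) set \<Rightarrow> nat \<Rightarrow> (nat \<Rightarrow> 'a \<Rightarrow> real) \<Rightarrow> bool" where
  "is_basis W N q \<longleftrightarrow> (\<forall>j<N. q j \<in> W)
     \<and> (\<forall>c. (\<forall>x. (\<Sum>j<N. c j * q j x) = 0) \<longrightarrow> (\<forall>j<N. c j = 0))
     \<and> (\<forall>w\<in>W. \<exists>c. \<forall>x. w x = (\<Sum>j<N. c j * q j x))"

end

theory Submission
  imports Defs
begin



lemma prod_deriv: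
  "finite I \<Longrightarrow> ((\<lambda>t. \<Prod>i\<in>I. (1 + t * v i) ^ m i) has_real_derivative (\<Sum>i\<in>I. real (m i) * v i)) (at 0)"
proof (induction I rule: finite_induct)
  case empty
  then show ?case by simp
next
  case (insert a I)
  have d: "((\<lambda>t. (1 + t * v a) ^ m a) has_real_derivative real (m a) * v a) (at 0)"
    by (auto intro!: derivative_eq_intros)
  from DERIV_mult[OF d insert.IH] show ?case using insert by (simp add: mult_ac)
qed

lemma poly_rep:
  assumes "f \<in> polys n k"
  obtains c where "\<And>x. f x = (\<Sum>\<alpha>\<in>exps n k. c \<alpha> * (\<Prod>i<n. x i ^ \<alpha> i))"
  using assms unfolding polys_def by blast

lemma pderiv_formula:
  assumes "f \<in> polys n k" "i < n" "\<And>x. f x = (\<Sum>\<alpha>\<in>exps n k. c \<alpha> * (\<Prod>i<n. x i ^ \<alpha> i))"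
  shows "((\<lambda>t. f (ones(i:=t))) has_real_derivative (\<Sum>\<alpha>\<in>exps n k. c \<alpha> * real (\<alpha> i))) (at 1)"
    and "pderiv_at f i ones = (\<Sum>\<alpha>\<in>exps n k. c \<alpha> * real (\<alpha> i))"
proof -
  have e: "f (ones(i:=t)) = (\<Sum>\<alpha>\<in>exps n k. c \<alpha> * t ^ \<alpha> i)" for t
  proof -
    have "(\<Prod>j<n. (ones(i:=t)) j ^ \<alpha> j) = t ^ \<alpha> i" for \<alpha>
    proof -
      have "(\<Prod>j<n. (ones(i:=t)) j ^ \<alpha> j) = (\<Prod>j<n. if j = i then t ^ \<alpha> i else 1)"
        by (rule prod.cong) (auto simp: ones_def)
      then show ?thesis using assms(2) by (simp add: prod.delta)
    qed
    then show ?thesis using assms(3) by simp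
  qed
  have "((\<lambda>t. (\<Sum>\<alpha>\<in>exps n k. c \<alpha> * t ^ \<alpha> i)) has_real_derivative (\<Sum>\<alpha>\<in>exps n k. c \<alpha> * real (\<alpha> i))) (at 1)"
    by (auto intro!: derivative_eq_intros simp: mult.commute)
  then show d: "((\<lambda>t. f (ones(i:=t))) has_real_derivative (\<Sum>\<alpha>\<in>exps n k. c \<alpha> * real (\<alpha> i))) (at 1)"
    by (simp add: e)
  show "pderiv_at f i ones = (\<Sum>\<alpha>\<in>exps n k. c \<alpha> * real (\<alpha> i))"
    unfolding pderiv_at_def using DERIV_imp_deriv[OF d] by (simp add: ones_def)
qed

lemma line_deriv:
  assumes "f \<in> polys n k"
  shows "((\<lambda>t. f (\<lambda>i. 1 + t * v i)) has_real_derivative (\<Sum>i<n. v i * pderiv_at f i ones)) (at 0)"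
proof -
  obtain c where c: "\<And>x. f x = (\<Sum>\<alpha>\<in>exps n k. c \<alpha> * (\<Prod>i<n. x i ^ \<alpha> i))"
    using poly_rep[OF assms] by blast
  have "((\<lambda>t. (\<Sum>\<alpha>\<in>exps n k. c \<alpha> * (\<Prod>i<n. (1 + t * v i) ^ \<alpha> i))) has_real_derivative
        (\<Sum>\<alpha>\<in>exps n k. c \<alpha> * (\<Sum>i<n. real (\<alpha> i) * v i))) (at 0)"
    by (intro DERIV_sum DERIV_cmult prod_deriv) simp
  moreover have "(\<Sum>\<alpha>\<in>exps n k. c \<alpha> * (\<Sum>i<n. real (\<alpha> i) * v i)) = (\<Sum>i<n. v i * pderiv_at f i ones)"
  proof -
    have "(\<Sum>i<n. v i * pderiv_at f i ones) = (\<Sum>i<n. v i * (\<Sum>\<alpha>\<in>exps n k. c \<alpha> * real (\<alpha> i)))"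
      using pderiv_formula(2)[OF assms _ c] by simp
    also have "\<dots> = (\<Sum>i<n. \<Sum>\<alpha>\<in>exps n k. c \<alpha> * (real (\<alpha> i) * v i))"
      by (simp add: sum_distrib_left mult_ac)
    also have "\<dots> = (\<Sum>\<alpha>\<in>exps n k. c \<alpha> * (\<Sum>i<n. real (\<alpha> i) * v i))"
      by (subst sum.swap) (simp add: sum_distrib_left)
    finally show ?thesis by simp
  qed
  ultimately show ?thesis by (simp add: c)
qed




lemma cos_sum_zero:
  assumes s: "sin (h/2) \<noteq> 0" and nh: "real n * h = 2*pi*real k"
  shows "(\<Sum>i<n. cos (b + real i * h)) = 0"
proof -
  define g where "g i = sin (b + real i * h - h/2)" for i :: nat
  have "2 * sin (h/2) * cos (b + real i * h) = g (Suc i) - g i" for i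
  proof -
    define x where "x = b + real i * h"
    have m: "sin (h/2 - x) = - sin (x - h/2)" by (metis minus_diff_eq sin_minus)
    have "2 * sin (h/2) * cos x = sin (x + h/2) - sin (x - h/2)"
      by (simp add: sin_add sin_diff)
    moreover have "g (Suc i) = sin (x + h/2)" unfolding g_def x_def
      by (rule arg_cong[where f=sin]) (simp add: algebra_simps)
    ultimately show ?thesis by (simp add: g_def x_def)
  qed
  then have "2 * sin (h/2) * (\<Sum>i<n. cos (b + real i * h)) = g n - g 0"
    by (simp add: sum_distrib_left sum_lessThan_telescope)
  also have "g n = g 0"
  proof -
    have "b + real n * h - h/2 = (b - h/2) + 2 * real k * pi" using nh by simp
    then have "g n = sin ((b - h/2) + 2 * real k * pi)" unfolding g_def by metis
    then show ?thesis by (simp add: g_def sin_add)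
  qed
  finally show ?thesis using s by simp
qed

lemma sin_sum_zero:
  assumes s: "sin (h/2) \<noteq> 0" and nh: "real n * h = 2*pi*real k"
  shows "(\<Sum>i<n. sin (b + real i * h)) = 0"
proof -
  define g where "g i = cos (b + real i * h - h/2)" for i :: nat
  have "2 * sin (h/2) * sin (b + real i * h) = g i - g (Suc i)" for i
  proof -
    define x where "x = b + real i * h"
    have m: "cos (h/2 - x) = cos (x - h/2)" by (metis minus_diff_eq cos_minus)
    have "2 * sin (h/2) * sin x = cos (x - h/2) - cos (x + h/2)"
      by (simp add: cos_add cos_diff)
    moreover have "g (Suc i) = cos (x + h/2)" unfolding g_def x_def
      by (rule arg_cong[where f=cos]) (simp add: algebra_simps)
    ultimately show ?thesis by (simp add: g_def x_def)
  qed
  then have "2 * sin (h/2) * (\<Sum>i<n. sin (b + real i * h)) = g 0 - g n"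
    by (simp add: sum_distrib_left sum_lessThan_telescope')
  also have "g n = g 0"
  proof -
    have "b + real n * h - h/2 = (b - h/2) + 2 * real k * pi" using nh by simp
    then have "g n = cos ((b - h/2) + 2 * real k * pi)" unfolding g_def by metis
    then show ?thesis by (simp add: g_def cos_add)
  qed
  finally show ?thesis using s by simp
qed




lemma pfun_exp: "pfun (1 + y) = 2* y + 3* y^2 + y^3 * (2/3 - (1/6)* y + (1/15)* y^2)"
  by (simp add: pfun_def algebra_simps power2_eq_square power3_eq_cube numeral_eq_Suc)

lemma h_at_one:
  fixes N :: nat
  assumes n: "n > 0" and hpoly: "h \<in> polys n 4" and qpoly: "\<forall>j<N. q j \<in> polys n 3"
    and eq: "\<forall>x. Ffun n x + (sqnorm n x - real n) * h x = (\<Sum>j<N. (q j x)^2)"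
    and q0: "\<forall>j<N. q j ones = 0"
  shows "h ones = 1"
proof -
  define x where "x s = (\<lambda>i::nat. 1 + s * (1::real))" for s :: real
  have x0: "x 0 = ones" by (simp add: x_def ones_def)
  define D where "D j = (\<Sum>i<n. 1 * pderiv_at (q j) i ones)" for j
  have dq: "((\<lambda>s. q j (x s)) has_real_derivative D j) (at 0)" if "j < N" for j
    using line_deriv[of "q j" n 3 "\<lambda>_. 1"] qpoly that by (simp add: x_def D_def)
  have lq: "((\<lambda>s. q j (x s) / s) \<longlongrightarrow> D j) (at 0)" if "j < N" for j
    using dq[OF that] q0 that x0 by (simp add: has_field_derivative_iff)
  have lq0: "((\<lambda>s. q j (x s)) \<longlongrightarrow> 0) (at 0)" if "j < N" for j
    using DERIV_isCont[OF dq[OF that]] q0 that x0 by (simp add: isCont_def)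
  have L: "((\<lambda>s. \<Sum>j<N. q j (x s) * (q j (x s) / s)) \<longlongrightarrow> (\<Sum>j<N. 0 * D j)) (at 0)"
    by (intro tendsto_sum tendsto_mult lq lq0) auto
  have hc: "((\<lambda>s. h (x s)) \<longlongrightarrow> h ones) (at 0)"
    using DERIV_isCont[OF line_deriv[OF hpoly, of "\<lambda>_. 1"]] x0 by (simp add: isCont_def x_def)
  define P where "P s = 2 + 3* s + s^2 * (2/3 - (1/6)* s + (1/15)* s^2)" for s :: real
  have R: "((\<lambda>s. - real n * P s + real n * (2 + s) * h (x s)) \<longlongrightarrow>
      - real n * P 0 + real n * (2 + 0) * h ones) (at 0)"
    unfolding P_def by (intro tendsto_intros hc)
  have ev: "\<forall>\<^sub>F s in at 0. (\<Sum>j<N. q j (x s) * (q j (x s) / s)) = - real n * P s + real n * (2 + s) * h (x s)"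
    unfolding eventually_at_filter
  proof (intro always_eventually allI impI)
    fix s :: real assume s: "s \<noteq> 0"
    have F: "Ffun n (x s) = - real n * pfun (1 + s)"
      by (simp add: Ffun_def x_def)
    have S: "sqnorm n (x s) - real n = real n * (s * (2 + s))"
      by (simp add: sqnorm_def x_def power2_eq_square algebra_simps)
    have pf: "pfun (1 + s) = s * P s"
      by (simp add: pfun_exp P_def algebra_simps power2_eq_square power3_eq_cube)
    have "(\<Sum>j<N. (q j (x s))^2) = s * (- real n * P s + real n * (2 + s) * h (x s))"
      using eq[rule_format, of "x s"] F S pf by (simp add: algebra_simps)
    moreover have "(\<Sum>j<N. q j (x s) * (q j (x s) / s)) = (\<Sum>j<N. (q j (x s))^2) / s"
      by (simp add: sum_divide_distrib power2_eq_square)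
    ultimately show "(\<Sum>j<N. q j (x s) * (q j (x s) / s)) = - real n * P s + real n * (2 + s) * h (x s)"
      using s by simp
  qed
  have "(\<Sum>j<N. 0 * D j) = - real n * P 0 + real n * (2 + 0) * h ones"
    using tendsto_unique[OF _ Lim_transform_eventually[OF L ev] R] by simp
  then have "0 = - real n * 2 + real n * 2 * h ones" by (simp add: P_def)
  then show ?thesis using n by (simp add: algebra_simps)
qed

lemma dir_lemma:
  fixes N :: nat
  assumes hpoly: "h \<in> polys n 4" and qpoly: "\<forall>j<N. q j \<in> polys n 3"
    and eq: "\<forall>x. Ffun n x + (sqnorm n x - real n) * h x = (\<Sum>j<N. (q j x)^2)"
    and q0: "\<forall>j<N. q j ones = 0" and h1: "h ones = 1"
    and sv: "(\<Sum>i<n. v i) = 0"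
    and sS: "1 / (1 - cos (2*pi / real n)) * (\<Sum>i<n. (v i - v ((i+1) mod n))^2) = 2 * (\<Sum>i<n. (v i)^2)"
    and j: "j < N"
  shows "(\<Sum>i<n. v i * pderiv_at (q j) i ones) = 0"
proof -
  define c where "c = 1 / (1 - cos (2*pi / real n))"
  define S where "S = (\<Sum>i<n. (v i - v ((i+1) mod n))^2)"
  define V where "V = (\<Sum>i<n. (v i)^2)"
  define x where "x t = (\<lambda>i::nat. 1 + t * v i)" for t :: real
  have x0: "x 0 = ones" by (simp add: x_def ones_def)
  define D where "D j = (\<Sum>i<n. v i * pderiv_at (q j) i ones)" for j
  have dq: "((\<lambda>s. q j (x s)) has_real_derivative D j) (at 0)" if "j < N" for j
    using line_deriv[of "q j" n 3 v] qpoly that by (simp add: x_def D_def)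
  have lq: "((\<lambda>s. q j (x s) / s) \<longlongrightarrow> D j) (at 0)" if "j < N" for j
    using dq[OF that] q0 that x0 by (simp add: has_field_derivative_iff)
  have L: "((\<lambda>s. \<Sum>j<N. (q j (x s) / s)^2) \<longlongrightarrow> (\<Sum>j<N. (D j)^2)) (at 0)"
    by (intro tendsto_sum tendsto_power lq) auto
  have hc: "((\<lambda>s. h (x s)) \<longlongrightarrow> h ones) (at 0)"
    using DERIV_isCont[OF line_deriv[OF hpoly, of v]] x0 by (simp add: isCont_def x_def)
  define R where "R t = (\<Sum>i<n. (v i)^3 * (2/3 - (1/6)*t* v i + (1/15)*t^2*(v i)^2))" for t :: real
  have RR: "((\<lambda>t. c * S - 3 * V + V * h (x t) - t * R t) \<longlongrightarrow> c * S - 3 * V + V * h ones - 0 * R 0) (at 0)"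
    unfolding R_def by (intro tendsto_intros hc)
  have ev: "\<forall>\<^sub>F t in at 0. (\<Sum>j<N. (q j (x t) / t)^2) = c * S - 3 * V + V * h (x t) - t * R t"
    unfolding eventually_at_filter
  proof (intro always_eventually allI impI)
    fix t :: real assume t: "t \<noteq> 0"
    have d: "(\<Sum>i<n. (x t i - x t ((i+1) mod n))^2) = t^2 * S"
      unfolding S_def sum_distrib_left
      by (rule sum.cong) (simp_all add: x_def power2_eq_square algebra_simps)
    have p: "(\<Sum>i<n. pfun (x t i)) = 2 * t * (\<Sum>i<n. v i) + 3 * t^2 * V + t^3 * R t"
    proof -
      have "(\<Sum>i<n. pfun (x t i)) = (\<Sum>i<n. 2 * t * v i + 3 * t^2 * (v i)^2 + t^3 * ((v i)^3 * (2/3 - (1/6)*t* v i + (1/15)*t^2*(v i)^2)))"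
        by (rule sum.cong) (simp_all add: x_def pfun_exp power_mult_distrib algebra_simps)
      then show ?thesis by (simp add: sum.distrib sum_distrib_left V_def R_def)
    qed
    have F: "Ffun n (x t) = c * (t^2 * S) - (3 * t^2 * V + t^3 * R t)"
      using d p sv by (simp add: Ffun_def c_def)
    have Sq: "sqnorm n (x t) - real n = t^2 * V"
    proof -
      have "sqnorm n (x t) = (\<Sum>i<n. 1 + 2 * t * v i + t^2 * (v i)^2)"
        unfolding sqnorm_def by (rule sum.cong) (simp_all add: x_def power2_eq_square algebra_simps)
      then show ?thesis using sv by (simp add: sum.distrib sum_distrib_left[symmetric] V_def)
    qed
    have "(\<Sum>j<N. (q j (x t))^2) = t^2 * (c * S - 3 * V + V * h (x t) - t * R t)"
      using eq[rule_format, of "x t"] F Sq by (simp add: algebra_simps power2_eq_square power3_eq_cube)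
    moreover have "(\<Sum>j<N. (q j (x t) / t)^2) = (\<Sum>j<N. (q j (x t))^2) / t^2"
      by (simp add: sum_divide_distrib power_divide)
    ultimately show "(\<Sum>j<N. (q j (x t) / t)^2) = c * S - 3 * V + V * h (x t) - t * R t"
      using t by simp
  qed
  have "(\<Sum>j<N. (D j)^2) = c * S - 3 * V + V * h ones - 0 * R 0"
    using tendsto_unique[OF _ Lim_transform_eventually[OF L ev] RR] by simp
  also have "\<dots> = 0" using sS h1 by (simp add: c_def S_def V_def)
  finally have "(\<Sum>j<N. (D j)^2) = 0" .
  then have "(D j)^2 = 0" using sum_nonneg_eq_0_iff[of "{..<N}" "\<lambda>j. (D j)^2"] j by auto
  then show ?thesis by (simp add: D_def)
qed




lemma pd_has:
  assumes "f \<in> polys n k" "i < n"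
  shows "((\<lambda>t. f (ones(i:=t))) has_real_derivative pderiv_at f i ones) (at 1)"
proof -
  obtain c where c: "\<And>x. f x = (\<Sum>\<alpha>\<in>exps n k. c \<alpha> * (\<Prod>i<n. x i ^ \<alpha> i))"
    using poly_rep[OF assms(1)] by blast
  have e: "pderiv_at f i ones = (\<Sum>\<alpha>\<in>exps n k. c \<alpha> * real (\<alpha> i))"
    by (rule pderiv_formula(2)[OF assms c])
  show ?thesis unfolding e by (rule pderiv_formula(1)[OF assms c])
qed

lemma trig_facts:
  assumes n: "n \<ge> 3"
  defines "\<theta> \<equiv> 2*pi / real n"
  shows "(\<Sum>i<n. phi n i) = 0" "(\<Sum>i<n. psi n i) = 0"
    "1 / (1 - cos \<theta>) * (\<Sum>i<n. (phi n i - phi n ((i+1) mod n))^2) = 2 * (\<Sum>i<n. (phi n i)^2)"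
    "1 / (1 - cos \<theta>) * (\<Sum>i<n. (psi n i - psi n ((i+1) mod n))^2) = 2 * (\<Sum>i<n. (psi n i)^2)"
proof -
  have npos: "real n > 0" using n by simp
  have phi_eq: "phi n i = cos (\<theta> + real i * \<theta>)" for i
    unfolding phi_def \<theta>_def by (rule arg_cong[where f=cos]) (simp add: divide_simps algebra_simps)
  have psi_eq: "psi n i = sin (\<theta> + real i * \<theta>)" for i
    unfolding psi_def \<theta>_def by (rule arg_cong[where f=sin]) (simp add: divide_simps algebra_simps)
  have nth: "real n * \<theta> = 2 * pi" using npos by (simp add: \<theta>_def)
  have shift: "\<theta> + real ((i+1) mod n) * \<theta> = 2*\<theta> + real i * \<theta> \<or>
               \<theta> + real ((i+1) mod n) * \<theta> + 2*pi = 2*\<theta> + real i * \<theta>" if "i < n" for i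
  proof (cases "i + 1 < n")
    case True then show ?thesis by (simp add: algebra_simps)
  next
    case False
    then have "i + 1 = n" using that by simp
    then have m: "(i+1) mod n = 0" by simp
    have "real n = real i + 1" using \<open>i + 1 = n\<close> by linarith
    then have "real n * \<theta> = real i * \<theta> + \<theta>" by (simp add: algebra_simps)
    then have "2*pi + \<theta> = 2*\<theta> + real i * \<theta>" using nth by linarith
    then show ?thesis using m by simp
  qed
  have phis: "phi n ((i+1) mod n) = cos (2*\<theta> + real i * \<theta>)" if "i < n" for i
    using shift[OF that] by (metis cos_periodic phi_eq)
  have psis: "psi n ((i+1) mod n) = sin (2*\<theta> + real i * \<theta>)" if "i < n" for i
    using shift[OF that] by (metis sin_periodic psi_eq)
  have th_pos: "0 < \<theta>" using npos by (simp add: \<theta>_def)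
  have th_lt: "\<theta> < pi"
  proof -
    have "2 * pi / real n \<le> 2 * pi / 3" using n by (intro divide_left_mono) auto
    moreover have "2 * pi / 3 < pi" using pi_gt_zero by simp
    ultimately show ?thesis unfolding \<theta>_def by linarith
  qed
  have s1: "sin (\<theta>/2) \<noteq> 0" using th_pos th_lt by (intro order.strict_implies_not_eq[symmetric] sin_gt_zero) auto
  have s2: "sin ((2*\<theta>)/2) \<noteq> 0" using th_pos th_lt sin_gt_zero[of \<theta>] by simp
  have k1: "real n * \<theta> = 2*pi*real (1::nat)" using nth by simp
  have k2: "real n * (2*\<theta>) = 2*pi*real (2::nat)" using nth by (simp add: mult.commute)
  have Z1: "(\<Sum>i<n. cos (b + real i * \<theta>)) = 0" for b by (rule cos_sum_zero[OF s1 k1])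
  have Z1s: "(\<Sum>i<n. sin (b + real i * \<theta>)) = 0" for b by (rule sin_sum_zero[OF s1 k1])
  have Z2: "(\<Sum>i<n. cos (b + real i * (2*\<theta>))) = 0" for b by (rule cos_sum_zero[OF s2 k2])
  show "(\<Sum>i<n. phi n i) = 0" using Z1 by (simp add: phi_eq)
  show "(\<Sum>i<n. psi n i) = 0" using Z1s by (simp add: psi_eq)
  have c1: "cos \<theta> < 1" using th_pos th_lt cos_monotone_0_pi[of 0 \<theta>] by simp
  have sq_c: "(\<Sum>i<n. (cos (b + real i * \<theta>))^2) = real n / 2" for b
  proof -
    have "(\<Sum>i<n. (cos (b + real i * \<theta>))^2) = (\<Sum>i<n. 1/2 + cos (2*b + real i * (2*\<theta>)) / 2)"
    proof (rule sum.cong)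
      fix i assume "i \<in> {..<n}"
      have e: "2*b + real i * (2*\<theta>) = 2 * (b + real i * \<theta>)" by (simp add: algebra_simps)
      show "(cos (b + real i * \<theta>))^2 = 1/2 + cos (2*b + real i * (2*\<theta>)) / 2"
        unfolding e cos_double_cos by (simp add: field_simps)
    qed simp
    also have "\<dots> = real n / 2 + (\<Sum>i<n. cos (2*b + real i * (2*\<theta>))) / 2"
      by (simp add: sum.distrib sum_divide_distrib)
    finally show ?thesis using Z2 by simp
  qed
  have sq_s: "(\<Sum>i<n. (sin (b + real i * \<theta>))^2) = real n / 2" for b
  proof -
    have "(\<Sum>i<n. (sin (b + real i * \<theta>))^2) = (\<Sum>i<n. 1/2 - cos (2*b + real i * (2*\<theta>)) / 2)"
    proof (rule sum.cong)
      fix i assume "i \<in> {..<n}"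
      have e: "2*b + real i * (2*\<theta>) = 2 * (b + real i * \<theta>)" by (simp add: algebra_simps)
      show "(sin (b + real i * \<theta>))^2 = 1/2 - cos (2*b + real i * (2*\<theta>)) / 2"
        unfolding e cos_double_sin by (simp add: field_simps)
    qed simp
    also have "\<dots> = real n / 2 - (\<Sum>i<n. cos (2*b + real i * (2*\<theta>))) / 2"
      by (simp add: sum_subtractf sum_divide_distrib)
    finally show ?thesis using Z2 by simp
  qed
  have pr_c: "(\<Sum>i<n. cos (\<theta> + real i * \<theta>) * cos (2*\<theta> + real i * \<theta>)) = real n * cos \<theta> / 2"
  proof -
    have "(\<Sum>i<n. cos (\<theta> + real i * \<theta>) * cos (2*\<theta> + real i * \<theta>)) = (\<Sum>i<n. cos \<theta> / 2 + cos (3*\<theta> + real i * (2*\<theta>)) / 2)"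
    proof (rule sum.cong)
      fix i assume "i \<in> {..<n}"
      have a: "cos (\<theta> + real i * \<theta> - (2*\<theta> + real i * \<theta>)) = cos \<theta>"
        by (metis cos_minus minus_diff_eq add_diff_cancel_right' diff_add_eq_diff_diff_swap mult_2 diff_diff_eq2 add.commute)
      show "cos (\<theta> + real i * \<theta>) * cos (2*\<theta> + real i * \<theta>) = cos \<theta> / 2 + cos (3*\<theta> + real i * (2*\<theta>)) / 2"
        unfolding cos_times_cos a by (simp add: algebra_simps)
    qed simp
    also have "\<dots> = real n * cos \<theta> / 2 + (\<Sum>i<n. cos (3*\<theta> + real i * (2*\<theta>))) / 2"
      by (simp add: sum.distrib sum_divide_distrib)
    finally show ?thesis using Z2 by simp
  qed
  have pr_s: "(\<Sum>i<n. sin (\<theta> + real i * \<theta>) * sin (2*\<theta> + real i * \<theta>)) = real n * cos \<theta> / 2"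
  proof -
    have "(\<Sum>i<n. sin (\<theta> + real i * \<theta>) * sin (2*\<theta> + real i * \<theta>)) = (\<Sum>i<n. cos \<theta> / 2 - cos (3*\<theta> + real i * (2*\<theta>)) / 2)"
    proof (rule sum.cong)
      fix i assume "i \<in> {..<n}"
      have a: "cos (\<theta> + real i * \<theta> - (2*\<theta> + real i * \<theta>)) = cos \<theta>"
        by (metis cos_minus minus_diff_eq add_diff_cancel_right' diff_add_eq_diff_diff_swap mult_2 diff_diff_eq2 add.commute)
      show "sin (\<theta> + real i * \<theta>) * sin (2*\<theta> + real i * \<theta>) = cos \<theta> / 2 - cos (3*\<theta> + real i * (2*\<theta>)) / 2"
        unfolding sin_times_sin a by (simp add: algebra_simps diff_divide_distrib)
    qed simp
    also have "\<dots> = real n * cos \<theta> / 2 - (\<Sum>i<n. cos (3*\<theta> + real i * (2*\<theta>))) / 2"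
      by (simp add: sum_subtractf sum_divide_distrib)
    finally show ?thesis using Z2 by simp
  qed
  have expand: "(\<Sum>i<n. (f i - g i)^2) = (\<Sum>i<n. (f i)^2) + (\<Sum>i<n. (g i)^2) - 2 * (\<Sum>i<n. f i * g i)"
    for f g :: "nat \<Rightarrow> real"
    by (simp add: power2_diff sum.distrib sum_subtractf sum_distrib_left mult_ac)
  show "1 / (1 - cos \<theta>) * (\<Sum>i<n. (phi n i - phi n ((i+1) mod n))^2) = 2 * (\<Sum>i<n. (phi n i)^2)"
  proof -
    have "(\<Sum>i<n. (phi n i - phi n ((i+1) mod n))^2) = (\<Sum>i<n. (cos (\<theta> + real i * \<theta>) - cos (2*\<theta> + real i * \<theta>))^2)"
    proof (rule sum.cong)
      fix i assume "i \<in> {..<n}"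
      then show "(phi n i - phi n ((i+1) mod n))^2 = (cos (\<theta> + real i * \<theta>) - cos (2*\<theta> + real i * \<theta>))^2"
        using phis[of i] phi_eq[of i] by simp
    qed simp
    also have "\<dots> = real n * (1 - cos \<theta>)"
      unfolding expand using sq_c[of \<theta>] sq_c[of "2*\<theta>"] pr_c by (simp add: algebra_simps)
    finally show ?thesis using c1 by (simp add: phi_eq sq_c)
  qed
  show "1 / (1 - cos \<theta>) * (\<Sum>i<n. (psi n i - psi n ((i+1) mod n))^2) = 2 * (\<Sum>i<n. (psi n i)^2)"
  proof -
    have "(\<Sum>i<n. (psi n i - psi n ((i+1) mod n))^2) = (\<Sum>i<n. (sin (\<theta> + real i * \<theta>) - sin (2*\<theta> + real i * \<theta>))^2)"
    proof (rule sum.cong)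
      fix i assume "i \<in> {..<n}"
      then show "(psi n i - psi n ((i+1) mod n))^2 = (sin (\<theta> + real i * \<theta>) - sin (2*\<theta> + real i * \<theta>))^2"
        using psis[of i] psi_eq[of i] by simp
    qed simp
    also have "\<dots> = real n * (1 - cos \<theta>)"
      unfolding expand using sq_s[of \<theta>] sq_s[of "2*\<theta>"] pr_s by (simp add: algebra_simps)
    finally show ?thesis using c1 by (simp add: psi_eq sq_s)
  qed
qed




theorem mainTheorem7:
  fixes n :: nat and W :: "((nat \<Rightarrow> real) \<Rightarrow> real) set"
  assumes "n \<ge> 3"
    and "W \<subseteq> polys n 3" and "is_subspace W"
    and "\<exists>h N q. h \<in> polys n 4 \<and> is_basis W N q \<and>
           (\<forall>x. Ffun n x + (sqnorm n x - real n) * h x = (\<Sum>j<N. (q j x)^2))"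
  shows "W \<subseteq> Wmax n"
proof -
  obtain h N q where hpoly: "h \<in> polys n 4" and B: "is_basis W N q"
    and eq: "\<forall>x. Ffun n x + (sqnorm n x - real n) * h x = (\<Sum>j<N. (q j x)^2)"
    using assms(4) by blast
  have qW: "\<forall>j<N. q j \<in> W" using B by (simp add: is_basis_def)
  have qpoly: "\<forall>j<N. q j \<in> polys n 3" using qW assms(2) by blast
  have F1: "Ffun n ones = 0" by (simp add: Ffun_def ones_def pfun_def)
  have S1: "sqnorm n ones = real n" by (simp add: sqnorm_def ones_def)
  have "(\<Sum>j<N. (q j ones)^2) = 0" using eq[rule_format, of ones] F1 S1 by simp
  then have q0: "\<forall>j<N. q j ones = 0"
    using sum_nonneg_eq_0_iff[of "{..<N}" "\<lambda>j. (q j ones)^2"] by auto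
  have h1: "h ones = 1" using h_at_one[OF _ hpoly qpoly eq q0] assms(1) by simp
  have Dphi: "(\<Sum>i<n. phi n i * pderiv_at (q j) i ones) = 0" if "j < N" for j
    using dir_lemma[OF hpoly qpoly eq q0 h1 trig_facts(1)[OF assms(1)] trig_facts(3)[OF assms(1)] that] .
  have Dpsi: "(\<Sum>i<n. psi n i * pderiv_at (q j) i ones) = 0" if "j < N" for j
    using dir_lemma[OF hpoly qpoly eq q0 h1 trig_facts(2)[OF assms(1)] trig_facts(4)[OF assms(1)] that] .
  show ?thesis
  proof
    fix w assume wW: "w \<in> W"
    have wpoly: "w \<in> polys n 3" using wW assms(2) by blast
    obtain c where c: "\<And>x. w x = (\<Sum>j<N. c j * q j x)" using B wW unfolding is_basis_def by blast
    have w1: "w ones = 0" using q0 by (simp add: c)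
    have pd: "pderiv_at w i ones = (\<Sum>j<N. c j * pderiv_at (q j) i ones)" if "i < n" for i
    proof -
      have "((\<lambda>t. \<Sum>j<N. c j * q j (ones(i:=t))) has_real_derivative (\<Sum>j<N. c j * pderiv_at (q j) i ones)) (at 1)"
        by (intro DERIV_sum DERIV_cmult pd_has) (use qpoly that in auto)
      then have "deriv (\<lambda>t. w (ones(i:=t))) 1 = (\<Sum>j<N. c j * pderiv_at (q j) i ones)"
        by (simp add: c DERIV_imp_deriv)
      then show ?thesis by (simp add: pderiv_at_def ones_def)
    qed
    have gen: "(\<Sum>i<n. v i * pderiv_at w i ones) = 0"
      if "\<And>j. j < N \<Longrightarrow> (\<Sum>i<n. v i * pderiv_at (q j) i ones) = 0" for v
    proof -
      have "(\<Sum>i<n. v i * pderiv_at w i ones) = (\<Sum>i<n. \<Sum>j<N. c j * (v i * pderiv_at (q j) i ones))"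
        by (rule sum.cong) (simp_all add: pd sum_distrib_left mult_ac)
      also have "\<dots> = (\<Sum>j<N. c j * (\<Sum>i<n. v i * pderiv_at (q j) i ones))"
        by (subst sum.swap) (simp add: sum_distrib_left)
      also have "\<dots> = 0" using that by simp
      finally show ?thesis .
    qed
    show "w \<in> Wmax n" unfolding Wmax_def
      using wpoly w1 gen[OF Dphi] gen[OF Dpsi] by simp
  qed
qed


end
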